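(* Fix $\hat\Sigma\in\mathbb{P}_d$ and $\alpha>0$. Define $\mathcal{B}_R(\hat\Sigma;\alpha)=\{A\in\mathbb{P}_d:\delta_R(A,\hat\Sigma)\le\alpha\}$ and, for $\rho>0$, $\mathcal{B}_S(\hat\Sigma;\rho)=\{A\in\mathbb{P}_d:\delta_S^2(A,\hat\Sigma)\le\rho\}$. Then $\mathcal{B}_R(\hat\Sigma;\alpha)\subseteq\mathcal{B}_S(\hat\Sigma;C\alpha)$ for every $C\ge\alpha/8$.
   Context: $\mathbb{P}_d$ denotes the set of real symmetric $d\times d$ positive definite matrices. The Riemannian distance is $\delta_R(A,B)=\|\log(A^{-1/2}BA^{-1/2})\|_F$ (matrix logarithm, Frobenius norm). The S-divergence is $\delta_S^2(A,B)=\log\det\left(\frac{A+B}{2}\right)-\frac12\log\det(AB)$, and $\delta_S=\sqrt{\delta_S^2}$. *)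

theory Defs
  imports "HOL-Analysis.Analysis"
begin

text \<open>Real symmetric positive definite matrices (the set P_d, d = CARD('n)).\<close>
definition posdef :: "real^'n^'n \<Rightarrow> bool" where
  "posdef A \<longleftrightarrow> transpose A = A \<and> (\<forall>x. x \<noteq> 0 \<longrightarrow> x \<bullet> (A *v x) > 0)"

fun matpow :: "real^'n^'n \<Rightarrow> nat \<Rightarrow> real^'n^'n" where
  "matpow L 0 = mat 1"
| "matpow L (Suc k) = L ** matpow L k"

definition mexp :: "real^'n^'n \<Rightarrow> real^'n^'n" where
  "mexp L = (\<Sum>k. (1 / fact k) *\<^sub>R matpow L k)"

definition mlog :: "real^'n^'n \<Rightarrow> real^'n^'n" where
  "mlog M = (THE L. transpose L = L \<and> mexp L = M)"

definition msqrt :: "real^'n^'n \<Rightarrow> real^'n^'n" where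
  "msqrt A = (THE S. posdef S \<and> S ** S = A)"

definition minvsqrt :: "real^'n^'n \<Rightarrow> real^'n^'n" where
  "minvsqrt A = matrix_inv (msqrt A)"

text \<open>Riemannian distance; norm on real^'n^'n is the Frobenius norm.\<close>
definition deltaR :: "real^'n^'n \<Rightarrow> real^'n^'n \<Rightarrow> real" where
  "deltaR A B = norm (mlog (minvsqrt A ** B ** minvsqrt A))"

definition deltaS2 :: "real^'n^'n \<Rightarrow> real^'n^'n \<Rightarrow> real" where
  "deltaS2 A B = ln (det ((1/2) *\<^sub>R (A + B))) - (1/2) * ln (det (A ** B))"

definition ballR :: "real^'n^'n \<Rightarrow> real \<Rightarrow> (real^'n^'n) set" where
  "ballR S \<alpha> = {A. posdef A \<and> deltaR A S \<le> \<alpha>}"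

definition ballS :: "real^'n^'n \<Rightarrow> real \<Rightarrow> (real^'n^'n) set" where
  "ballS S \<rho> = {A. posdef A \<and> deltaS2 A S \<le> \<rho>}"

end

theory Submission
  imports Defs
begin

lemma p_sign: fixes t::real
  shows "0 \<le> t \<Longrightarrow> 0 \<le> t * (1 + exp t) - 2 * (exp t - 1)"
    and "t \<le> 0 \<Longrightarrow> t * (1 + exp t) - 2 * (exp t - 1) \<le> 0"
proof -
  define p where "p = (\<lambda>t::real. t * (1 + exp t) - 2 * (exp t - 1))"
  have d: "DERIV p x :> 1 - exp x + x * exp x" for x
    unfolding p_def by (auto intro!: derivative_eq_intros simp: algebra_simps)
  have pos: "0 \<le> 1 - exp x + x * exp x" for x::real
  proof -
    have "1 + (-x) \<le> exp (-x)" by (rule exp_ge_add_one_self)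
    hence "exp x * (1 - x) \<le> exp x * exp (-x)" by (intro mult_left_mono) auto
    thus ?thesis by (simp add: exp_minus field_simps)
  qed
  have p0: "p 0 = 0" by (simp add: p_def)
  show "0 \<le> t \<Longrightarrow> 0 \<le> t * (1 + exp t) - 2 * (exp t - 1)"
  proof -
    assume t: "0 \<le> t"
    have "p 0 \<le> p t" using d pos t by (intro DERIV_nonneg_imp_nondecreasing[of 0 t p]) auto
    thus ?thesis using p0 by (simp add: p_def)
  qed
  show "t \<le> 0 \<Longrightarrow> t * (1 + exp t) - 2 * (exp t - 1) \<le> 0"
  proof -
    assume t: "t \<le> 0"
    have "p t \<le> p 0" using d pos t by (intro DERIV_nonneg_imp_nondecreasing[of t 0 p]) auto
    thus ?thesis using p0 by (simp add: p_def)
  qed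
qed

lemma lncosh_bound: fixes t::real
  shows "ln ((1 + exp t) / 2) - t / 2 \<le> t\<^sup>2 / 8"
proof -
  define g where "g = (\<lambda>t::real. t\<^sup>2 / 8 - ln ((1 + exp t) / 2) + t / 2)"
  have pe: "0 < 1 + exp x" for x::real by (smt (verit) exp_gt_zero)
  have d: "DERIV g x :> (x * (1 + exp x) - 2 * (exp x - 1)) / (4 * (1 + exp x))" for x
  proof -
    have "DERIV g x :> 2 * x / 8 - (exp x / 2) / ((1 + exp x) / 2) + 1 / 2"
      unfolding g_def using pe[of x]
      by (auto intro!: derivative_eq_intros simp: field_simps)
    moreover have "2 * x / 8 - (exp x / 2) / ((1 + exp x) / 2) + 1 / 2
        = (x * (1 + exp x) - 2 * (exp x - 1)) / (4 * (1 + exp x))"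
      using pe[of x] by (simp add: field_simps)
    ultimately show ?thesis by simp
  qed
  have g0: "g 0 = 0" by (simp add: g_def)
  have "0 \<le> g t"
  proof (cases "0 \<le> t")
    case True
    have "g 0 \<le> g t"
    proof (rule DERIV_nonneg_imp_nondecreasing[of 0 t g])
      fix x assume "0 \<le> x" "x \<le> t"
      thus "\<exists>y. DERIV g x :> y \<and> 0 \<le> y" using d p_sign(1)[of x] pe[of x]
        by (intro exI[of _ "(x * (1 + exp x) - 2 * (exp x - 1)) / (4 * (1 + exp x))"]) auto
    qed (use True in auto)
    thus ?thesis using g0 by simp
  next
    case False
    have "g 0 \<le> g t"
    proof (rule DERIV_nonpos_imp_nonincreasing[of t 0 g])
      fix x assume "t \<le> x" "x \<le> 0"
      thus "\<exists>y. DERIV g x :> y \<and> y \<le> 0" using d p_sign(2)[of x] pe[of x]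
        by (intro exI[of _ "(x * (1 + exp x) - 2 * (exp x - 1)) / (4 * (1 + exp x))"])
           (auto simp: divide_nonpos_pos)
    qed (use False in auto)
    thus ?thesis using g0 by simp
  qed
  thus ?thesis by (simp add: g_def)
qed

lemma sym_inner:
  fixes A :: "real^'n^'n"
  assumes "transpose A = A"
  shows "x \<bullet> (A *v y) = (A *v x) \<bullet> y"
proof -
  have "x \<bullet> (A *v y) = (x v* A) \<bullet> y" by (simp add: dot_lmul_matrix)
  also have "x v* A = transpose A *v x" by (simp add: vector_matrix_mult_def matrix_vector_mult_def transpose_def vec_eq_iff mult.commute)
  finally show ?thesis using assms by simp
qed

lemma eigvec_exists:
  fixes A :: "real^'n^'n"
  assumes sym: "transpose A = A" and S: "subspace S" and nz: "x0 \<in> S" "x0 \<noteq> 0"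
    and inv: "\<And>x. x \<in> S \<Longrightarrow> A *v x \<in> S"
  shows "\<exists>v\<in>S. norm v = 1 \<and> A *v v = (v \<bullet> (A *v v)) *\<^sub>R v"
proof -
  define f where "f = (\<lambda>x::real^'n. x \<bullet> (A *v x))"
  define K where "K = sphere (0::real^'n) 1 \<inter> S"
  have cK: "compact K" unfolding K_def using S by (intro compact_Int_closed closed_subspace) auto
  have "x0 /\<^sub>R norm x0 \<in> K" unfolding K_def using nz S by (auto simp: subspace_scale)
  hence neK: "K \<noteq> {}" by auto
  have cf: "continuous_on K f" unfolding f_def
    by (intro continuous_intros linear_continuous_on matrix_vector_mul_linear)
  obtain v where vK: "v \<in> K" and vmax: "\<And>y. y \<in> K \<Longrightarrow> f y \<le> f v"
    using continuous_attains_sup[OF cK neK cf] by blast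
  define l where "l = f v"
  have vS: "v \<in> S" and nv: "norm v = 1" using vK by (auto simp: K_def)
  have vv: "v \<bullet> v = 1" using nv by (simp add: dot_square_norm)
  have bound: "f x \<le> l * (x \<bullet> x)" if xS: "x \<in> S" for x
  proof (cases "x = 0")
    case True thus ?thesis by (simp add: f_def)
  next
    case False
    have "x /\<^sub>R norm x \<in> K" unfolding K_def using xS S False by (auto simp: subspace_scale)
    hence "f (x /\<^sub>R norm x) \<le> l" using vmax l_def by auto
    moreover have "f (x /\<^sub>R norm x) = f x / (norm x)^2"
      using False by (simp add: f_def matrix_vector_mult_scaleR power2_eq_square field_simps)
    ultimately have "f x \<le> l * (norm x)^2" using False
      by (simp add: divide_le_eq mult.commute)
    thus ?thesis by (simp add: dot_square_norm)
  qed
  define u where "u = A *v v - l *\<^sub>R v"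
  have uS: "u \<in> S" unfolding u_def using S inv[OF vS] vS by (intro subspace_diff subspace_scale) auto
  have uv: "u \<bullet> v = 0" unfolding u_def l_def f_def using vv by (simp add: inner_diff_left inner_diff_right inner_commute)
  have uAv: "u \<bullet> (A *v v) = u \<bullet> u" unfolding u_def
    using uv by (simp add: inner_diff_right u_def)
  have "u = 0"
  proof (rule ccontr)
    assume "u \<noteq> 0"
    hence uu: "u \<bullet> u > 0" by simp
    define c where "c = \<bar>l * (u \<bullet> u) - f u\<bar> + 1"
    have c1: "c \<ge> 1" unfolding c_def by simp
    define t where "t = (u \<bullet> u) / c"
    have t0: "t > 0" unfolding t_def using uu c1 by simp
    have "v + t *\<^sub>R u \<in> S" using S vS uS by (intro subspace_add subspace_scale) auto
    from bound[OF this]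
    have "f (v + t *\<^sub>R u) \<le> l * ((v + t *\<^sub>R u) \<bullet> (v + t *\<^sub>R u))" .
    moreover have "f (v + t *\<^sub>R u) = l + 2 * t * (u \<bullet> u) + t^2 * f u"
    proof -
      have "v \<bullet> (A *v u) = u \<bullet> (A *v v)"
        using sym_inner[OF sym, of v u] by (simp add: inner_commute)
      thus ?thesis unfolding f_def l_def
        by (simp add: matrix_vector_right_distrib matrix_vector_mult_scaleR inner_add_left
              inner_add_right uAv power2_eq_square algebra_simps)
    qed
    moreover have "(v + t *\<^sub>R u) \<bullet> (v + t *\<^sub>R u) = 1 + t^2 * (u \<bullet> u)"
      using vv uv by (simp add: inner_add_left inner_add_right inner_commute power2_eq_square)
    ultimately have "l + 2 * t * (u \<bullet> u) + t^2 * f u \<le> l * (1 + t^2 * (u \<bullet> u))" by simp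
    hence "2 * t * (u \<bullet> u) \<le> t^2 * (l * (u \<bullet> u) - f u)" by (simp add: algebra_simps)
    also have "\<dots> \<le> t^2 * (c - 1)" unfolding c_def by (intro mult_left_mono) auto
    also have "\<dots> < t^2 * c" using t0 by simp
    also have "t^2 * c = t * (u \<bullet> u)" unfolding t_def using c1 by (simp add: power2_eq_square)
    finally have "2 * t * (u \<bullet> u) < t * (u \<bullet> u)" .
    thus False using t0 uu by (simp add: mult_less_cancel_left)
  qed
  hence "A *v v = l *\<^sub>R v" unfolding u_def by simp
  thus ?thesis using vS nv l_def f_def by auto
qed

definition dg :: "real^'n \<Rightarrow> real^'n^'n" where
  "dg d = (\<chi> i j. if i = j then d$i else 0)"

definition onb :: "(real^'n^'n) \<Rightarrow> (real^'n) set \<Rightarrow> bool" where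
  "onb A B \<longleftrightarrow> pairwise orthogonal B \<and> (\<forall>b\<in>B. norm b = 1 \<and> A *v b = (b \<bullet> (A *v b)) *\<^sub>R b)"

lemma onb_indep: "onb A B \<Longrightarrow> independent B"
  unfolding onb_def by (intro pairwise_orthogonal_independent) auto

lemma onb_card: "onb A (B :: (real^'n) set) \<Longrightarrow> finite B \<and> card B \<le> CARD('n)"
  using independent_bound[OF onb_indep] by simp

lemma spectral:
  fixes A :: "real^'n^'n"
  assumes sym: "transpose A = A"
  shows "\<exists>P d. orthogonal_matrix P \<and> A = P ** dg d ** transpose P"
proof -
  obtain B where oB: "onb A B" and Bmax: "\<And>B'. onb A B' \<Longrightarrow> card B' \<le> card B"
    using ex_has_greatest_nat[of "onb A" "{}" card "CARD('n) + 1"] onb_card[of A]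
    by (force simp: onb_def)
  have finB: "finite B" using onb_card[OF oB] by simp
  have cardB: "card B = CARD('n)"
  proof (rule ccontr)
    assume "card B \<noteq> CARD('n)"
    hence lt: "card B < CARD('n)" using onb_card[OF oB] by simp
    have "dim B < DIM(real^'n)"
      using lt dim_span_eq_card_independent[OF onb_indep[OF oB]] by (simp add: dim_span)
    then obtain x where x0: "x \<noteq> 0" and xo: "\<And>y. y \<in> span B \<Longrightarrow> orthogonal x y"
      using orthogonal_to_subspace_exists by blast
    define S where "S = {z::real^'n. \<forall>b\<in>B. b \<bullet> z = 0}"
    have sS: "subspace S" unfolding S_def subspace_def by (auto simp: inner_add_right)
    have xS: "x \<in> S" unfolding S_def using xo span_base by (fastforce simp: orthogonal_def inner_commute)
    have invS: "A *v z \<in> S" if "z \<in> S" for z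
    proof -
      { fix b assume bB: "b \<in> B"
        have "b \<bullet> (A *v z) = (A *v b) \<bullet> z" by (rule sym_inner[OF sym])
        also have "\<dots> = (b \<bullet> (A *v b)) * (b \<bullet> z)" using oB bB unfolding onb_def
          by (metis inner_scaleR_left)
        also have "\<dots> = 0" using that bB by (simp add: S_def)
        finally have "b \<bullet> (A *v z) = 0" . }
      thus ?thesis by (simp add: S_def)
    qed
    obtain v where vS: "v \<in> S" and nv: "norm v = 1" and ev: "A *v v = (v \<bullet> (A *v v)) *\<^sub>R v"
      using eigvec_exists[OF sym sS xS x0 invS] by blast
    have vB: "v \<notin> B"
    proof
      assume "v \<in> B" hence "v \<bullet> v = 0" using vS by (simp add: S_def)
      thus False using nv by simp
    qed
    have "onb A (insert v B)"
      using oB vS nv ev unfolding onb_def pairwise_insert S_def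
      by (auto simp: orthogonal_def inner_commute)
    from Bmax[OF this] show False using vB finB by simp
  qed
  obtain g where bg: "bij_betw g (UNIV::'n set) B"
    using finite_same_card_bij[of "UNIV::'n set" B] finB cardB by auto
  define P :: "real^'n^'n" where "P = (\<chi> i j. g j $ i)"
  define d :: "real^'n" where "d = (\<chi> j. g j \<bullet> (A *v g j))"
  have gB: "g j \<in> B" for j using bg by (auto simp: bij_betw_def)
  have ginj: "g j = g k \<Longrightarrow> j = k" for j k using bg by (auto simp: bij_betw_def inj_def)
  have gon: "g j \<bullet> g k = (if j = k then 1 else 0)" for j k
  proof (cases "j = k")
    case True thus ?thesis using oB gB[of j] unfolding onb_def by (simp add: dot_square_norm)
  next
    case False
    hence "g j \<noteq> g k" using ginj by auto
    thus ?thesis using oB gB[of j] gB[of k] False unfolding onb_def pairwise_def orthogonal_def by auto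
  qed
  have PtP: "transpose P ** P = mat 1"
    unfolding P_def using gon
    by (simp add: matrix_matrix_mult_def transpose_def mat_def vec_eq_iff inner_vec_def)
  hence oP: "orthogonal_matrix P" by (simp add: orthogonal_matrix)
  have AP: "A ** P = P ** dg d"
  proof -
    have ev: "A *v g j = d $ j *\<^sub>R g j" for j using oB gB[of j] unfolding onb_def d_def by auto
    have "(A ** P) $ i $ j = (P ** dg d) $ i $ j" for i j
    proof -
      have "(A ** P) $ i $ j = (A *v g j) $ i"
        by (simp add: P_def matrix_matrix_mult_def matrix_vector_mult_def)
      also have "\<dots> = d $ j * g j $ i" by (simp add: ev)
      also have "\<dots> = (P ** dg d) $ i $ j"
        by (simp add: P_def dg_def matrix_matrix_mult_def if_distrib cong: if_cong)
      finally show ?thesis .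
    qed
    thus ?thesis by (simp add: vec_eq_iff)
  qed
  have "A = A ** (P ** transpose P)" using oP by (simp add: orthogonal_matrix_def)
  also have "\<dots> = P ** dg d ** transpose P" by (simp add: matrix_mul_assoc AP)
  finally show ?thesis using oP by blast
qed

lemma dg_left: "(dg a ** M) $ i $ j = a $ i * M $ i $ j"
  unfolding matrix_matrix_mult_def dg_def
  by (auto simp: if_distrib if_distribR sum.delta[OF finite] cong: if_cong)

lemma dg_right: "(M ** dg a) $ i $ j = M $ i $ j * a $ j"
  unfolding matrix_matrix_mult_def dg_def
  by (auto simp: if_distrib if_distribR sum.delta'[OF finite] cong: if_cong)

lemma matrix_add_rdistrib': "((A + B) ** C) = (A ** C) + (B ** C)"
  by (vector matrix_matrix_mult_def sum.distrib[symmetric] field_simps)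

lemma dg_mul: "dg a ** dg b = dg (\<chi> i. a $ i * b $ i)"
  by (simp add: vec_eq_iff dg_left) (simp add: dg_def)

lemma dg_one: "dg (\<chi> i. 1) = mat 1"
  by (simp add: dg_def mat_def vec_eq_iff)

lemma transpose_dg: "transpose (dg a) = dg a"
  by (simp add: dg_def transpose_def vec_eq_iff)

lemma orthD: "orthogonal_matrix P \<Longrightarrow> transpose P ** P = mat 1"
  "orthogonal_matrix P \<Longrightarrow> P ** transpose P = mat 1"
  by (auto simp: orthogonal_matrix_def)

lemma conj_sym: "transpose (P ** dg a ** transpose P) = P ** dg a ** transpose P"
  by (simp add: matrix_transpose_mul transpose_dg matrix_mul_assoc)

lemma conj_mul:
  assumes "orthogonal_matrix P"
  shows "(P ** dg a ** transpose P) ** (P ** dg b ** transpose P) = P ** dg (\<chi> i. a $ i * b $ i) ** transpose P"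
proof -
  have "(P ** dg a ** transpose P) ** (P ** dg b ** transpose P)
      = P ** dg a ** (transpose P ** P) ** dg b ** transpose P"
    by (simp add: matrix_mul_assoc)
  also have "\<dots> = P ** (dg a ** dg b) ** transpose P"
    using orthD[OF assms] by (simp add: matrix_mul_assoc)
  finally show ?thesis by (simp add: dg_mul)
qed

lemma conj_one: "orthogonal_matrix P \<Longrightarrow> P ** dg (\<chi> i. 1) ** transpose P = mat 1"
  by (simp add: dg_one orthD)

lemma matpow_conj:
  assumes "orthogonal_matrix P"
  shows "matpow (P ** dg a ** transpose P) k = P ** dg (\<chi> i. a $ i ^ k) ** transpose P"
proof (induction k)
  case 0 thus ?case using conj_one[OF assms] by simp
next
  case (Suc k)
  thus ?case by (simp add: conj_mul[OF assms])
qed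

lemma dg_linear: fixes P :: "real^'n^'n" shows "linear (\<lambda>v::real^'n. P ** dg v ** transpose P)"
proof -
  have "dg (x + y) = dg x + dg y" "dg (r *\<^sub>R x) = r *\<^sub>R dg x" for x y :: "real^'n" and r
    by (auto simp: dg_def vec_eq_iff)
  thus ?thesis
    by (intro linearI) (auto simp: matrix_add_ldistrib matrix_add_rdistrib' matrix_scalar_ac scalar_matrix_assoc)
qed

lemma mexp_conj:
  fixes P :: "real^'n^'n" and a :: "real^'n"
  assumes "orthogonal_matrix P"
  shows "mexp (P ** dg a ** transpose P) = P ** dg (\<chi> i. exp (a $ i)) ** transpose P"
proof -
  define T where "T = (\<lambda>v::real^'n. P ** dg v ** transpose P)"
  have bl: "bounded_linear T" unfolding T_def using dg_linear linear_conv_bounded_linear by blast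
  define c where "c = (\<lambda>k. (\<chi> i. a $ i ^ k /\<^sub>R fact k) :: real^'n)"
  have cs: "c sums (\<chi> i. exp (a $ i))"
  proof -
    have "(\<lambda>n. \<chi> i. \<Sum>k<n. a $ i ^ k /\<^sub>R fact k) \<longlonglongrightarrow> (\<chi> i. exp (a $ i))"
    proof (intro tendsto_vec_lambda)
      fix i show "(\<lambda>n. \<Sum>k<n. a $ i ^ k /\<^sub>R fact k) \<longlonglongrightarrow> exp (a $ i)"
        using exp_converges[of "a $ i"] unfolding sums_def .
    qed
    moreover have "(\<lambda>n. \<chi> i. \<Sum>k<n. a $ i ^ k /\<^sub>R fact k) = (\<lambda>n. \<Sum>k<n. c k)"
      by (auto simp: c_def vec_eq_iff)
    ultimately show ?thesis unfolding sums_def by simp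
  qed
  have "(\<lambda>k. T (c k)) sums T (\<chi> i. exp (a $ i))" by (rule bounded_linear.sums[OF bl cs])
  moreover have "T (c k) = (1 / fact k) *\<^sub>R matpow (P ** dg a ** transpose P) k" for k
  proof -
    have "c k = (1 / fact k) *\<^sub>R (\<chi> i. a $ i ^ k)" by (simp add: c_def vec_eq_iff divide_inverse mult.commute)
    hence "T (c k) = (1 / fact k) *\<^sub>R T (\<chi> i. a $ i ^ k)"
      using linear_scale[OF dg_linear] unfolding T_def by metis
    thus ?thesis unfolding T_def by (simp add: matpow_conj[OF assms])
  qed
  ultimately show ?thesis unfolding mexp_def T_def by (simp add: sums_iff)
qed

lemma conj_unique:
  assumes P: "orthogonal_matrix P" and Q: "orthogonal_matrix Q"
    and inj: "\<And>i j. f (a $ i) = f (b $ j) \<Longrightarrow> a $ i = b $ j"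
    and eq: "P ** dg (\<chi> i. f (a $ i)) ** transpose P = Q ** dg (\<chi> i. f (b $ i)) ** transpose Q"
  shows "P ** dg a ** transpose P = Q ** dg b ** transpose Q"
proof -
  define R where "R = transpose P ** Q"
  have e1: "dg (\<chi> i. f (a $ i)) ** R = R ** dg (\<chi> i. f (b $ i))"
  proof -
    have "transpose P ** (P ** dg (\<chi> i. f (a $ i)) ** transpose P) ** Q
        = transpose P ** (Q ** dg (\<chi> i. f (b $ i)) ** transpose Q) ** Q" using eq by simp
    moreover have "transpose P ** (P ** dg (\<chi> i. f (a $ i)) ** transpose P) ** Q
        = (transpose P ** P) ** dg (\<chi> i. f (a $ i)) ** (transpose P ** Q)"
      by (simp add: matrix_mul_assoc)
    moreover have "transpose P ** (Q ** dg (\<chi> i. f (b $ i)) ** transpose Q) ** Q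
        = (transpose P ** Q) ** dg (\<chi> i. f (b $ i)) ** (transpose Q ** Q)"
      by (simp add: matrix_mul_assoc)
    ultimately show ?thesis using orthD[OF P] orthD[OF Q] unfolding R_def by simp
  qed
  have e2: "dg a ** R = R ** dg b"
  proof -
    have "(dg a ** R) $ i $ j = (R ** dg b) $ i $ j" for i j
    proof -
      have "f (a $ i) * R $ i $ j = R $ i $ j * f (b $ j)"
        using arg_cong[OF e1, of "\<lambda>M. M $ i $ j"] by (simp add: dg_left dg_right)
      hence "R $ i $ j = 0 \<or> a $ i = b $ j" using inj by (auto simp: mult.commute)
      thus ?thesis by (auto simp: dg_left dg_right mult.commute)
    qed
    thus ?thesis by (simp add: vec_eq_iff)
  qed
  have PR: "P ** R = Q" unfolding R_def using orthD[OF P] by (simp add: matrix_mul_assoc)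
  have RQ: "R ** transpose Q = transpose P" unfolding R_def
    by (metis matrix_mul_assoc matrix_mul_rid orthD(2)[OF Q])
  have "P ** dg a ** transpose P = P ** (dg a ** R) ** transpose Q" by (metis RQ matrix_mul_assoc)
  also have "\<dots> = (P ** R) ** dg b ** transpose Q" using e2 by (simp add: matrix_mul_assoc)
  finally show ?thesis using PR by simp
qed

lemma det_conj:
  assumes "orthogonal_matrix P"
  shows "det (P ** dg a ** transpose P) = (\<Prod>i\<in>UNIV. a $ i)"
proof -
  have "det P * det (transpose P) = 1" using orthD(2)[OF assms] by (metis det_I det_mul)
  moreover have "det (dg a) = (\<Prod>i\<in>UNIV. a $ i)" by (subst det_diagonal) (auto simp: dg_def)
  ultimately show ?thesis by (simp add: det_mul)
qed

lemma norm_orth_vec: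
  fixes P :: "real^'n^'n"
  assumes "orthogonal_matrix P"
  shows "norm (P *v x) = norm x"
proof -
  have "(P *v x) \<bullet> (P *v x) = x \<bullet> x"
  proof -
    have "(P *v x) \<bullet> (P *v x) = ((P *v x) v* P) \<bullet> x" by (simp add: dot_lmul_matrix)
    also have "(P *v x) v* P = transpose P *v (P *v x)"
      by (simp add: vector_matrix_mult_def matrix_vector_mult_def transpose_def vec_eq_iff mult.commute)
    also have "\<dots> = x" using orthD(1)[OF assms] by (simp add: matrix_vector_mul_assoc)
    finally show ?thesis .
  qed
  thus ?thesis by (metis norm_eq)
qed

lemma frob: "(norm (M :: real^'n^'n))^2 = (\<Sum>i\<in>UNIV. \<Sum>j\<in>UNIV. (M $ i $ j)^2)"
  by (simp add: norm_vec_def L2_set_def sum_nonneg)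

lemma norm_transpose_mat: "norm (transpose (M :: real^'n^'n)) = norm M"
proof -
  have "(norm (transpose M))^2 = (norm M)^2" unfolding frob transpose_def
    by (simp, subst sum.swap, rule refl)
  thus ?thesis by (simp add: power2_eq_iff_nonneg)
qed

lemma norm_orth_left:
  assumes "orthogonal_matrix P"
  shows "norm (P ** (M :: real^'n^'n)) = norm M"
proof -
  have col: "(P ** M) $ i $ j = (P *v column j M) $ i" for i j
    by (simp add: matrix_matrix_mult_def matrix_vector_mult_def column_def)
  have cn: "(\<Sum>i\<in>UNIV. ((P *v column j M) $ i)^2) = (\<Sum>i\<in>UNIV. (M $ i $ j)^2)" for j
  proof -
    have "(\<Sum>i\<in>UNIV. ((P *v column j M) $ i)^2) = (norm (P *v column j M))^2"
      by (simp add: norm_vec_def L2_set_def sum_nonneg)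
    also have "\<dots> = (norm (column j M))^2" by (simp add: norm_orth_vec[OF assms])
    also have "\<dots> = (\<Sum>i\<in>UNIV. (M $ i $ j)^2)"
      by (simp add: norm_vec_def L2_set_def sum_nonneg column_def)
    finally show ?thesis .
  qed
  have "(norm (P ** M))^2 = (norm M)^2"
    unfolding frob col by (subst (1 2) sum.swap) (simp add: cn)
  thus ?thesis by (simp add: power2_eq_iff_nonneg)
qed

lemma norm_conj:
  assumes "orthogonal_matrix P"
  shows "norm (P ** dg a ** transpose P) = norm a"
proof -
  have "norm (P ** dg a ** transpose P) = norm (dg a ** transpose P)"
    by (simp add: matrix_mul_assoc[symmetric] norm_orth_left[OF assms])
  also have "\<dots> = norm (transpose (dg a ** transpose P))" by (simp add: norm_transpose_mat)
  also have "\<dots> = norm (dg a)" by (simp add: matrix_transpose_mul transpose_dg norm_orth_left[OF assms])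
  also have "(norm (dg a))^2 = (norm a)^2"
  proof -
    have e: "(dg a $ i $ j)^2 = (if i = j then (a$i)^2 else 0)" for i j by (simp add: dg_def)
    show ?thesis unfolding frob e by (simp add: norm_vec_def L2_set_def sum_nonneg)
  qed
  hence "norm (dg a) = norm a" by (simp add: power2_eq_iff_nonneg)
  finally show ?thesis .
qed

lemma inv_app:
  fixes P :: "real^'n^'n"
  assumes P: "orthogonal_matrix P"
  shows "P *v (transpose P *v x) = x" "transpose P *v (P *v x) = x"
  by (simp only: matrix_vector_mul_assoc orthD[OF P] matrix_vector_mul_lid)+

lemma quad_conj:
  fixes P :: "real^'n^'n"
  assumes P: "orthogonal_matrix P"
  shows "x \<bullet> ((P ** dg a ** transpose P) *v x) = (\<Sum>i\<in>UNIV. a $ i * ((transpose P *v x) $ i)^2)"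
proof -
  define y where "y = transpose P *v x"
  have "(P ** dg a ** transpose P) *v x = P *v (dg a *v y)"
    by (simp only: y_def matrix_vector_mul_assoc matrix_mul_assoc)
  hence "x \<bullet> ((P ** dg a ** transpose P) *v x) = (x v* P) \<bullet> (dg a *v y)"
    by (simp add: dot_lmul_matrix)
  also have "x v* P = y" unfolding y_def
    by (simp add: vector_matrix_mult_def matrix_vector_mult_def transpose_def vec_eq_iff mult.commute)
  also have "y \<bullet> (dg a *v y) = (\<Sum>i\<in>UNIV. a $ i * (y $ i)^2)"
    by (simp add: inner_vec_def matrix_vector_mult_def dg_def if_distrib if_distribR sum.delta
        power2_eq_square mult_ac cong: if_cong)
  finally show ?thesis by (simp add: y_def)
qed

lemma posdef_conj:
  fixes P :: "real^'n^'n"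
  assumes P: "orthogonal_matrix P" and pos: "\<And>i. a $ i > 0"
  shows "posdef (P ** dg a ** transpose P)"
  unfolding posdef_def
proof (intro conjI allI impI)
  show "transpose (P ** dg a ** transpose P) = P ** dg a ** transpose P" by (rule conj_sym)
  fix x :: "real^'n" assume x0: "x \<noteq> 0"
  have "transpose P *v x \<noteq> 0"
  proof
    assume "transpose P *v x = 0"
    hence "P *v (transpose P *v x) = 0" by simp
    thus False using x0 inv_app(1)[OF P, of x] by simp
  qed
  then obtain k where k: "(transpose P *v x) $ k \<noteq> 0" by (auto simp: vec_eq_iff)
  have "0 < a $ k * ((transpose P *v x) $ k)^2" using pos k by simp
  also have "\<dots> \<le> (\<Sum>i\<in>UNIV. a $ i * ((transpose P *v x) $ i)^2)"
    by (rule member_le_sum) (auto intro: mult_nonneg_nonneg less_imp_le[OF pos])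
  finally show "x \<bullet> ((P ** dg a ** transpose P) *v x) > 0" by (simp add: quad_conj[OF P])
qed

lemma posdef_decomp:
  fixes S :: "real^'n^'n"
  assumes "posdef S"
  shows "\<exists>P a. orthogonal_matrix P \<and> S = P ** dg a ** transpose P \<and> (\<forall>i. a $ i > 0)"
proof -
  have sym: "transpose S = S" using assms by (simp add: posdef_def)
  obtain P a where P: "orthogonal_matrix P" and S: "S = P ** dg a ** transpose P"
    using spectral[OF sym] by blast
  have "a $ i > 0" for i
  proof -
    define x where "x = P *v axis i 1"
    have tx: "transpose P *v x = axis i 1" unfolding x_def by (rule inv_app(2)[OF P])
    have "x \<noteq> 0"
    proof
      assume "x = 0" hence "transpose P *v x = 0" by simp
      thus False using tx by (simp add: axis_eq_0_iff)
    qed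
    hence "0 < x \<bullet> (S *v x)" using assms by (simp add: posdef_def)
    also have "\<dots> = (\<Sum>j\<in>UNIV. a $ j * ((axis i 1 :: real^'n) $ j)^2)"
      unfolding S quad_conj[OF P] tx ..
    also have "\<dots> = a $ i" by (simp add: axis_def if_distrib if_distribR sum.delta cong: if_cong)
    finally show ?thesis .
  qed
  thus ?thesis using P S by blast
qed

lemma msqrt_conj:
  fixes P :: "real^'n^'n"
  assumes P: "orthogonal_matrix P" and pos: "\<And>i. a $ i > 0"
  shows "msqrt (P ** dg a ** transpose P) = P ** dg (\<chi> i. sqrt (a $ i)) ** transpose P"
  unfolding msqrt_def
proof (rule the_equality)
  have sq: "(\<chi> i. sqrt (a $ i) * sqrt (a $ i)) = a" using pos by (simp add: vec_eq_iff less_imp_le)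
  show "posdef (P ** dg (\<chi> i. sqrt (a $ i)) ** transpose P) \<and>
    (P ** dg (\<chi> i. sqrt (a $ i)) ** transpose P) ** (P ** dg (\<chi> i. sqrt (a $ i)) ** transpose P) =
    P ** dg a ** transpose P"
    using posdef_conj[OF P, of "\<chi> i. sqrt (a $ i)"] pos conj_mul[OF P] sq by simp
  fix S assume "posdef S \<and> S ** S = P ** dg a ** transpose P"
  hence pS: "posdef S" and SS: "S ** S = P ** dg a ** transpose P" by auto
  obtain Q s where Q: "orthogonal_matrix Q" and S: "S = Q ** dg s ** transpose Q" and spos: "\<forall>i. s $ i > 0"
    using posdef_decomp[OF pS] by blast
  have "Q ** dg s ** transpose Q = P ** dg (\<chi> i. sqrt (a $ i)) ** transpose P"
  proof (rule conj_unique[OF Q P, where f = "\<lambda>x. x * x"])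
    fix i j assume "s $ i * s $ i = (\<chi> i. sqrt (a $ i)) $ j * (\<chi> i. sqrt (a $ i)) $ j"
    hence "(s $ i)^2 = a $ j" using pos[of j] by (simp add: power2_eq_square less_imp_le)
    hence "sqrt (a $ j) = s $ i" using spos by (intro real_sqrt_unique) (auto simp: less_imp_le)
    thus "s $ i = (\<chi> i. sqrt (a $ i)) $ j" by simp
  next
    show "Q ** dg (\<chi> i. s $ i * s $ i) ** transpose Q =
          P ** dg (\<chi> i. (\<chi> i. sqrt (a $ i)) $ i * (\<chi> i. sqrt (a $ i)) $ i) ** transpose P"
      using SS S conj_mul[OF Q] sq by simp
  qed
  thus "S = P ** dg (\<chi> i. sqrt (a $ i)) ** transpose P" using S by simp
qed

lemma matrix_inv_eq:
  fixes S W :: "real^'n^'n"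
  assumes "S ** W = mat 1" "W ** S = mat 1"
  shows "matrix_inv S = W"
proof -
  have "\<exists>W'. S ** W' = mat 1 \<and> W' ** S = mat 1" using assms by blast
  hence W': "S ** matrix_inv S = mat 1" "matrix_inv S ** S = mat 1"
    unfolding matrix_inv_def by (metis (mono_tags, lifting) someI_ex)+
  have "matrix_inv S = matrix_inv S ** (S ** W)" using assms by simp
  also have "\<dots> = W" using W' by (simp add: matrix_mul_assoc)
  finally show ?thesis .
qed

lemma mlog_conj:
  fixes Q :: "real^'n^'n"
  assumes Q: "orthogonal_matrix Q"
  shows "mlog (Q ** dg (\<chi> i. exp (t $ i)) ** transpose Q) = Q ** dg t ** transpose Q"
  unfolding mlog_def
proof (rule the_equality)
  show "transpose (Q ** dg t ** transpose Q) = Q ** dg t ** transpose Q \<and>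
        mexp (Q ** dg t ** transpose Q) = Q ** dg (\<chi> i. exp (t $ i)) ** transpose Q"
    by (simp add: conj_sym mexp_conj[OF Q])
  fix L assume L: "transpose L = L \<and> mexp L = Q ** dg (\<chi> i. exp (t $ i)) ** transpose Q"
  obtain R u where R: "orthogonal_matrix R" and Lr: "L = R ** dg u ** transpose R"
    using spectral[of L] L by blast
  show "L = Q ** dg t ** transpose Q" unfolding Lr
  proof (rule conj_unique[OF R Q, where f = exp])
    show "R ** dg (\<chi> i. exp (u $ i)) ** transpose R = Q ** dg (\<chi> i. exp (t $ i)) ** transpose Q"
      using L Lr mexp_conj[OF R] by simp
  qed simp
qed

theorem mainTheorem5:
  fixes \<Sigma> :: "real^'n^'n" and \<alpha> C :: real
  assumes "posdef \<Sigma>" and "\<alpha> > 0" and "C \<ge> \<alpha> / 8"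
  shows "ballR \<Sigma> \<alpha> \<subseteq> ballS \<Sigma> (C * \<alpha>)"
proof
  fix A assume "A \<in> ballR \<Sigma> \<alpha>"
  hence pA: "posdef A" and dR: "deltaR A \<Sigma> \<le> \<alpha>" by (auto simp: ballR_def)
  have symS: "transpose \<Sigma> = \<Sigma>" using assms(1) by (simp add: posdef_def)
  obtain P a where P: "orthogonal_matrix P" and A: "A = P ** dg a ** transpose P" and apos: "\<forall>i. a $ i > 0"
    using posdef_decomp[OF pA] by blast
  define S0 where "S0 = P ** dg (\<chi> i. sqrt (a $ i)) ** transpose P"
  define W where "W = P ** dg (\<chi> i. 1 / sqrt (a $ i)) ** transpose P"
  have msq: "msqrt A = S0" unfolding A S0_def using msqrt_conj[OF P] apos by blast
  have one: "(\<chi> i. (\<chi> i. sqrt (a $ i)) $ i * (\<chi> i. 1 / sqrt (a $ i)) $ i) = (\<chi> i. 1)"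
            "(\<chi> i. (\<chi> i. 1 / sqrt (a $ i)) $ i * (\<chi> i. sqrt (a $ i)) $ i) = (\<chi> i. 1)"
    using apos by (auto simp: vec_eq_iff) (metis less_irrefl)+
  have SW: "S0 ** W = mat 1" unfolding S0_def W_def conj_mul[OF P] one conj_one[OF P] ..
  have WS: "W ** S0 = mat 1" unfolding S0_def W_def conj_mul[OF P] one conj_one[OF P] ..
  have minv: "minvsqrt A = W" unfolding minvsqrt_def msq by (rule matrix_inv_eq[OF SW WS])
  define X where "X = W ** \<Sigma> ** W"
  have symW: "transpose W = W" unfolding W_def by (rule conj_sym)
  have pX: "posdef X" unfolding posdef_def
  proof (intro conjI allI impI)
    show "transpose X = X" unfolding X_def
      by (simp add: matrix_transpose_mul symW symS matrix_mul_assoc)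
    fix x :: "real^'n" assume x0: "x \<noteq> 0"
    have Wx: "W *v x \<noteq> 0"
    proof
      assume "W *v x = 0"
      hence "S0 *v (W *v x) = 0" by simp
      thus False using x0 SW by (simp add: matrix_vector_mul_assoc)
    qed
    have "x \<bullet> (X *v x) = x \<bullet> (W *v (\<Sigma> *v (W *v x)))"
      by (simp add: X_def matrix_vector_mul_assoc matrix_mul_assoc)
    also have "\<dots> = (W *v x) \<bullet> (\<Sigma> *v (W *v x))" by (rule sym_inner[OF symW])
    also have "\<dots> > 0" using assms(1) Wx by (simp add: posdef_def)
    finally show "x \<bullet> (X *v x) > 0" .
  qed
  obtain Q xv where Q: "orthogonal_matrix Q" and X: "X = Q ** dg xv ** transpose Q" and xpos: "\<forall>i. xv $ i > 0"
    using posdef_decomp[OF pX] by blast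
  define t where "t = (\<chi> i. ln (xv $ i))"
  have "(\<chi> i. exp (t $ i)) = xv" using xpos by (simp add: t_def vec_eq_iff)
  hence mlogX: "mlog X = Q ** dg t ** transpose Q" using mlog_conj[OF Q, of t] X by simp
  have dRt: "deltaR A \<Sigma> = norm t" unfolding deltaR_def minv X_def[symmetric] mlogX norm_conj[OF Q] ..
  have Sig: "\<Sigma> = S0 ** X ** S0"
  proof -
    have "S0 ** X ** S0 = (S0 ** W) ** \<Sigma> ** (W ** S0)" by (simp add: X_def matrix_mul_assoc)
    thus ?thesis using SW WS by simp
  qed
  have AS: "A = S0 ** S0"
  proof -
    have "(\<chi> i. (\<chi> i. sqrt (a $ i)) $ i * (\<chi> i. sqrt (a $ i)) $ i) = a" using apos by (simp add: vec_eq_iff less_imp_le)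
    thus ?thesis unfolding S0_def conj_mul[OF P] A by simp
  qed
  define h where "h = (\<chi> i. (1 + xv $ i) / 2)"
  have half: "(1/2) *\<^sub>R (mat 1 + X) = Q ** dg h ** transpose Q"
  proof -
    have lin: "linear (\<lambda>v::real^'n. Q ** dg v ** transpose Q)" by (rule dg_linear)
    have "(1/2) *\<^sub>R (mat 1 + X) = (1/2) *\<^sub>R (Q ** dg (\<chi> i. 1) ** transpose Q + Q ** dg xv ** transpose Q)"
      using conj_one[OF Q] X by simp
    also have "\<dots> = Q ** dg ((1/2) *\<^sub>R ((\<chi> i. 1) + xv)) ** transpose Q"
      using linear_add[OF lin] linear_scale[OF lin] by metis
    also have "(1/2) *\<^sub>R ((\<chi> i. 1) + xv) = h" by (simp add: h_def vec_eq_iff)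
    finally show ?thesis .
  qed
  have AplusS: "(1/2) *\<^sub>R (A + \<Sigma>) = S0 ** ((1/2) *\<^sub>R (mat 1 + X)) ** S0"
  proof -
    have "A + \<Sigma> = S0 ** (mat 1 + X) ** S0"
      unfolding AS Sig by (simp add: matrix_add_ldistrib matrix_add_rdistrib')
    thus ?thesis by (simp add: matrix_scalar_ac scalar_matrix_assoc)
  qed
  define D where "D = (\<Prod>i\<in>UNIV. sqrt (a $ i))"
  have detS0: "det S0 = D" unfolding S0_def D_def det_conj[OF P] by simp
  have Dpos: "D > 0" unfolding D_def using apos by (intro prod_pos) auto
  have hpos: "\<forall>i. h $ i > 0" using xpos by (simp add: h_def add_pos_pos)
  define Ph where "Ph = (\<Prod>i\<in>UNIV. h $ i)"
  define Px where "Px = (\<Prod>i\<in>UNIV. xv $ i)"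
  have Phpos: "Ph > 0" unfolding Ph_def using hpos by (intro prod_pos) auto
  have Pxpos: "Px > 0" unfolding Px_def using xpos by (intro prod_pos) auto
  have det3: "det (S ** M ** S) = det S * det M * det S" for S M :: "real^'n^'n"
    by (simp only: det_mul)
  have dh: "det (Q ** dg h ** transpose Q) = Ph" by (simp add: det_conj[OF Q] Ph_def)
  have dX: "det X = Px" unfolding X by (simp add: det_conj[OF Q] Px_def)
  have det1: "det ((1/2) *\<^sub>R (A + \<Sigma>)) = D * Ph * D"
    unfolding AplusS half det3 dh detS0 ..
  have det2: "det (A ** \<Sigma>) = (D * D) * (D * Px * D)"
    unfolding det_mul[of A \<Sigma>] unfolding Sig det3 dX detS0 AS det_mul[of S0 S0] detS0 ..
  have "deltaS2 A \<Sigma> = ln Ph - (1/2) * ln Px"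
    unfolding deltaS2_def det1 det2 using Dpos Phpos Pxpos
    by (simp add: ln_mult algebra_simps)
  also have "\<dots> = (\<Sum>i\<in>UNIV. ln ((1 + exp (t $ i)) / 2) - t $ i / 2)"
  proof -
    have "ln Ph = (\<Sum>i\<in>UNIV. ln (h $ i))" unfolding Ph_def using hpos
      by (intro ln_prod) (auto simp: less_imp_neq[symmetric])
    moreover have "ln Px = (\<Sum>i\<in>UNIV. t $ i)" unfolding Px_def t_def using xpos
      by (simp add: ln_prod less_imp_neq[symmetric])
    moreover have "h $ i = (1 + exp (t $ i)) / 2" for i using xpos by (simp add: h_def t_def)
    ultimately show ?thesis by (simp add: sum_subtractf sum_divide_distrib sum_distrib_left)
  qed
  also have "\<dots> \<le> (\<Sum>i\<in>UNIV. (t $ i)^2 / 8)" by (intro sum_mono lncosh_bound)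
  also have "\<dots> = (norm t)^2 / 8"
  proof -
    have "(norm t)^2 = (\<Sum>i\<in>UNIV. (t $ i)^2)" by (simp add: norm_vec_def L2_set_def sum_nonneg)
    thus ?thesis by (simp add: sum_divide_distrib)
  qed
  also have "\<dots> \<le> \<alpha>^2 / 8" using dR dRt by (simp add: power_mono)
  also have "\<dots> \<le> C * \<alpha>" using assms(2,3) by (simp add: power2_eq_square mult_right_mono)
  finally show "A \<in> ballS \<Sigma> (C * \<alpha>)" using pA by (simp add: ballS_def)
qed

end
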